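(* Let $\mathcal{A}$ be a finite alphabet equipped with a total order $<$, extended to the lexicographic order on infinite words, and let $a \in \mathcal{A}$. Suppose $\mathbf{t}, \mathbf{s}, \mathbf{t}^{(1)}, \mathbf{s}^{(1)} \in \mathcal{A}^{\omega}$ are infinite words such that $\mathbf{t} = \Psi_z(\mathbf{t}^{(1)})$ and $\mathbf{s} = \Psi_z(\mathbf{s}^{(1)})$ for some letter $z$ that occurs in $\mathbf{t}^{(1)}$. Then \[ \min(\mathbf{t}^{(1)}) = a\mathbf{s}^{(1)} \iff \min(\mathbf{t}) = a\mathbf{s}. \]
   Context: For a letter $z \in \mathcal{A}$, $\Psi_z$ is the morphism of $\mathcal{A}^*$ defined by $\Psi_z(z) = z$ and $\Psi_z(y) = zy$ for every letter $y \neq z$; it extends letterwise to infinite words. Lexicographic order on words: $u < v$ iff $u$ is a proper prefix of $v$, or $u = xbu'$, $v = xcv'$ with letters $b < c$; for infinite words $\mathbf{u} < \mathbf{v}$ iff they first differ at some position where $\mathbf{u}$ has the smaller letter. For an infinite word $\mathbf{w}$ and $k \ge 1$, let $\min(\mathbf{w}\,|\,k)$ denote the lexicographically smallest factor (contiguous block) of $\mathbf{w}$ of length $k$; these are prefixes of one another, and $\min(\mathbf{w})$ is the infinite word $\lim_{k\to\infty} \min(\mathbf{w}\,|\,k)$. *)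

theory Defs
  imports Main
begin

definition psi :: "'a \<Rightarrow> 'a \<Rightarrow> 'a list" where
  "psi z y = (if y = z then [z] else [z, y])"

text \<open>Letterwise extension of Psi_z to infinite words: the i-th letter of
  Psi_z(w) is the i-th letter of Psi_z(w 0) Psi_z(w 1) ... Psi_z(w i)
  (which has length at least i+1, since every image is nonempty).\<close>
definition psi_inf :: "'a \<Rightarrow> (nat \<Rightarrow> 'a) \<Rightarrow> (nat \<Rightarrow> 'a)" where
  "psi_inf z w = (\<lambda>i. concat (map (\<lambda>j. psi z (w j)) [0..<Suc i]) ! i)"

definition factors :: "(nat \<Rightarrow> 'a) \<Rightarrow> nat \<Rightarrow> 'a list set" where
  "factors w k = {map (\<lambda>j. w (i + j)) [0..<k] | i. True}"

definition min_factor :: "(nat \<Rightarrow> 'a::linorder) \<Rightarrow> nat \<Rightarrow> 'a list" where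
  "min_factor w k = (THE u. u \<in> factors w k \<and> (\<forall>v \<in> factors w k. lexordp_eq u v))"

text \<open>min(w) = lim_k min(w|k); since the min(w|k) are prefixes of one another,
  its i-th letter is the i-th letter of min(w|i+1).\<close>
definition min_word :: "(nat \<Rightarrow> 'a::linorder) \<Rightarrow> (nat \<Rightarrow> 'a)" where
  "min_word w = (\<lambda>i. min_factor w (Suc i) ! i)"

end

theory Submission imports Defs begin
definition pre :: "nat \<Rightarrow> (nat \<Rightarrow> 'a) \<Rightarrow> 'a list" where
  "pre k x = map x [0..<k]"
definition sh :: "nat \<Rightarrow> (nat \<Rightarrow> 'a) \<Rightarrow> (nat \<Rightarrow> 'a)" where
  "sh i w = (\<lambda>j. w (i + j))"
definition lex_le :: "(nat \<Rightarrow> 'a::linorder) \<Rightarrow> (nat \<Rightarrow> 'a) \<Rightarrow> bool" where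
  "lex_le x y \<longleftrightarrow> x = y \<or> (\<exists>p. (\<forall>j<p. x j = y j) \<and> x p < y p)"

lemma pre_0[simp]: "pre 0 x = []" by (simp add: pre_def)
lemma pre_Suc: "pre (Suc k) x = x 0 # pre k (\<lambda>n. x (Suc n))"
  unfolding pre_def by (simp add: upt_conv_Cons map_Suc_upt[symmetric] del: upt_Suc)
lemma length_pre[simp]: "length (pre k x) = k" by (simp add: pre_def)
lemma nth_pre[simp]: "i < k \<Longrightarrow> pre k x ! i = x i" by (simp add: pre_def)
lemma take_pre: "j \<le> k \<Longrightarrow> take j (pre k x) = pre j x"
  by (simp add: pre_def take_map)
lemma factors_pre: "factors w k = {pre k (sh i w) | i. True}"
  by (simp add: factors_def pre_def sh_def)

lemma lex_le_pre: "lex_le x y \<Longrightarrow> lexordp_eq (pre k x) (pre k y)"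
proof -
  have "\<forall>(x::nat \<Rightarrow> 'a) y k. (\<forall>j<p. x j = y j) \<and> x p < y p \<longrightarrow> lexordp_eq (pre k x) (pre k y)" for p :: nat
  proof (induction p)
    case 0
    show ?case
    proof (intro allI impI)
      fix x y :: "nat \<Rightarrow> 'a" and k :: nat
      assume h: "(\<forall>j<0. x j = y j) \<and> x 0 < y 0"
      show "lexordp_eq (pre k x) (pre k y)"
        using h by (cases k) (simp_all add: pre_Suc)
    qed
  next
    case (Suc p)
    show ?case
    proof (intro allI impI)
      fix x y :: "nat \<Rightarrow> 'a" and k :: nat
      assume h: "(\<forall>j<Suc p. x j = y j) \<and> x (Suc p) < y (Suc p)"
      show "lexordp_eq (pre k x) (pre k y)"
      proof (cases k)
        case 0 then show ?thesis by simp
      next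
        case (Suc k')
        have "lexordp_eq (pre k' (\<lambda>n. x (Suc n))) (pre k' (\<lambda>n. y (Suc n)))"
          using Suc.IH h by auto
        then show ?thesis using Suc h by (simp add: pre_Suc)
      qed
    qed
  qed
  then show "lex_le x y \<Longrightarrow> lexordp_eq (pre k x) (pre k y)"
    unfolding lex_le_def by (auto simp: lexordp_eq_refl)
qed

lemma not_pre_le: "\<forall>(x::nat \<Rightarrow> 'a::linorder) y. (\<forall>j<p. x j = y j) \<and> y p < x p \<longrightarrow> \<not> lexordp_eq (pre (Suc p) x) (pre (Suc p) y)"
proof (induction p)
  case 0 then show ?case by (auto simp: pre_Suc dest: order.asym)
next
  case (Suc p)
  show ?case
  proof (intro allI impI)
    fix x y :: "nat \<Rightarrow> 'a" 
    assume h: "(\<forall>j<Suc p. x j = y j) \<and> y (Suc p) < x (Suc p)"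
    have "\<not> lexordp_eq (pre (Suc p) (\<lambda>n. x (Suc n))) (pre (Suc p) (\<lambda>n. y (Suc n)))"
      using Suc.IH h by auto
    then show "\<not> lexordp_eq (pre (Suc (Suc p)) x) (pre (Suc (Suc p)) y)"
      using h by (subst (1 2) pre_Suc) simp
  qed
qed

lemma pre_lex_le: assumes "\<And>k. lexordp_eq (pre k x) (pre k y)" shows "lex_le x y"
proof (rule ccontr)
  assume n: "\<not> lex_le x y"
  then have "\<exists>p. x p \<noteq> y p" unfolding lex_le_def by auto
  then obtain p where p: "x p \<noteq> y p" "\<forall>j<p. x j = y j" using exists_least_iff[of "\<lambda>p. x p \<noteq> y p"] by blast
  have "y p < x p" using n p unfolding lex_le_def by (meson linorder_neqE)
  then show False using not_pre_le[of p] p assms by blast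
qed

lemma lex_le_iff: "lex_le x y \<longleftrightarrow> (\<forall>k. lexordp_eq (pre k x) (pre k y))"
  using lex_le_pre pre_lex_le by blast

lemma lexeq_pre_mono: "\<forall>x y k. j \<le> k \<longrightarrow> lexordp_eq (pre k x) (pre k y) \<longrightarrow> lexordp_eq (pre j x) (pre j y)"
proof (induction j)
  case 0 then show ?case by simp
next
  case (Suc j)
  show ?case
  proof (intro allI impI)
    fix x y :: "nat \<Rightarrow> 'a" and k
    assume a: "Suc j \<le> k" "lexordp_eq (pre k x) (pre k y)"
    then obtain k' where k: "k = Suc k'" "j \<le> k'" by (cases k) auto
    show "lexordp_eq (pre (Suc j) x) (pre (Suc j) y)"
      using a k Suc.IH by (auto simp: pre_Suc)
  qed
qed

lemma factors_ne: "factors w k \<noteq> {}" by (auto simp: factors_pre)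

lemma factors_fin: "finite (factors (w::nat \<Rightarrow> 'a::finite) k)"
proof -
  have "factors w k \<subseteq> {xs. set xs \<subseteq> UNIV \<and> length xs = k}" by (auto simp: factors_pre)
  then show ?thesis using finite_lists_length_eq[of "UNIV::'a set" k] finite_subset by auto
qed

lemma ex_min_list: "finite A \<Longrightarrow> A \<noteq> {} \<Longrightarrow> \<exists>u\<in>A. \<forall>v\<in>A. lexordp_eq u (v::'a::linorder list)"
proof (induction A rule: finite_ne_induct)
  case (singleton x) then show ?case by (simp add: lexordp_eq_refl)
next
  case (insert x F)
  then obtain u where u: "u \<in> F" "\<forall>v\<in>F. lexordp_eq u v" by blast
  show ?case
  proof (cases "lexordp_eq x u")
    case True then show ?thesis using u by (auto intro: lexordp_eq_trans lexordp_eq_refl)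
  next
    case False then have "lexordp_eq u x" using lexordp_eq_linear by blast
    then show ?thesis using u by auto
  qed
qed

lemma min_factor_ex1: "\<exists>!u. u \<in> factors (w::nat \<Rightarrow> 'a::{finite,linorder}) k \<and> (\<forall>v \<in> factors w k. lexordp_eq u v)"
  using ex_min_list[OF factors_fin factors_ne, of w k] lexordp_eq_antisym by blast

lemma min_factor_prop: "min_factor (w::nat \<Rightarrow> 'a::{finite,linorder}) k \<in> factors w k \<and> (\<forall>v \<in> factors w k. lexordp_eq (min_factor w k) v)"
  unfolding min_factor_def by (rule theI'[OF min_factor_ex1])

lemma min_factor_eq: "u \<in> factors (w::nat \<Rightarrow> 'a::{finite,linorder}) k \<Longrightarrow> (\<forall>v \<in> factors w k. lexordp_eq u v) \<Longrightarrow> min_factor w k = u"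
  using min_factor_ex1[of w k] min_factor_prop[of w k] by blast

lemma min_factor_take: assumes "j \<le> k"
  shows "take j (min_factor (w::nat \<Rightarrow> 'a::{finite,linorder}) k) = min_factor w j"
proof -
  obtain i where i: "min_factor w k = pre k (sh i w)" using min_factor_prop[of w k] by (auto simp: factors_pre)
  show ?thesis
  proof (rule min_factor_eq[symmetric])
    show "take j (min_factor w k) \<in> factors w j" using i assms by (auto simp: factors_pre take_pre)
    show "\<forall>v\<in>factors w j. lexordp_eq (take j (min_factor w k)) v"
    proof
      fix v assume "v \<in> factors w j"
      then obtain i' where v: "v = pre j (sh i' w)" by (auto simp: factors_pre)
      have "lexordp_eq (min_factor w k) (pre k (sh i' w))" using min_factor_prop[of w k] by (auto simp: factors_pre)
      then show "lexordp_eq (take j (min_factor w k)) v"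
        using lexeq_pre_mono[of j] assms i v by (auto simp: take_pre)
    qed
  qed
qed

lemma pre_min_word: "pre k (min_word (w::nat \<Rightarrow> 'a::{finite,linorder})) = min_factor w k"
proof (rule nth_equalityI)
  show "length (pre k (min_word w)) = length (min_factor w k)"
    using min_factor_prop[of w k] by (auto simp: factors_pre)
next
  fix i assume "i < length (pre k (min_word w))"
  then have ik: "i < k" by simp
  have "min_factor w k ! i = take (Suc i) (min_factor w k) ! i" by simp
  also have "\<dots> = min_factor w (Suc i) ! i" using ik by (simp add: min_factor_take)
  finally show "pre k (min_word w) ! i = min_factor w k ! i" using ik by (simp add: min_word_def)
qed

lemma min_word_props: "(\<forall>k. pre k (min_word (w::nat \<Rightarrow> 'a::{finite,linorder})) \<in> factors w k) \<and> (\<forall>i. lex_le (min_word w) (sh i w))"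
  using min_factor_prop[of w] by (auto simp: pre_min_word lex_le_iff factors_pre)

lemma min_word_char: assumes "\<forall>k. pre k x \<in> factors (w::nat \<Rightarrow> 'a::{finite,linorder}) k" "\<forall>i. lex_le x (sh i w)"
  shows "min_word w = x"
proof -
  have "min_factor w k = pre k x" for k
    by (rule min_factor_eq) (use assms in \<open>auto simp: factors_pre lex_le_iff\<close>)
  then show ?thesis unfolding min_word_def by auto
qed

abbreviation C where "C z w n \<equiv> concat (map (\<lambda>j. psi z (w j)) [0..<n])"

lemma C_len: "n \<le> length (C z w n)"
  by (induction n) (auto simp: psi_def)

lemma C_stable: assumes "i < n" shows "C z w n ! i = psi_inf z w i"
proof -
  obtain d where n: "n = Suc i + d" using assms by (auto simp: less_iff_Suc_add)
  have "C z w n = C z w (Suc i) @ concat (map (\<lambda>j. psi z (w j)) [Suc i..<Suc i + d])"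
    unfolding n by (subst upt_add_eq_append[of 0 "Suc i" d]) (simp, simp only: map_append concat_append)
  moreover have "i < length (C z w (Suc i))" using C_len[of "Suc i" z w] by linarith
  ultimately show ?thesis by (simp add: nth_append psi_inf_def del: upt_Suc)
qed

lemma C_Suc: "C z w (Suc n) = psi z (w 0) @ C z (\<lambda>k. w (Suc k)) n"
  by (simp add: upt_conv_Cons map_Suc_upt[symmetric] map_map o_def del: upt_Suc)

lemma psi0[simp]: "psi_inf z w 0 = z"
  by (simp add: psi_inf_def psi_def)

lemma psiS: "psi_inf z w (Suc j) = (if w 0 = z then psi_inf z (\<lambda>k. w (Suc k)) j
     else case_nat (w 0) (psi_inf z (\<lambda>k. w (Suc k))) j)"
proof -
  have "psi_inf z w (Suc j) = C z w (Suc (Suc j)) ! Suc j" by (simp add: psi_inf_def del: upt_Suc)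
  also have "\<dots> = (psi z (w 0) @ C z (\<lambda>k. w (Suc k)) (Suc j)) ! Suc j" by (simp only: C_Suc)
  finally have e: "psi_inf z w (Suc j) = (psi z (w 0) @ C z (\<lambda>k. w (Suc k)) (Suc j)) ! Suc j" .
  show ?thesis
  proof (cases "w 0 = z")
    case True then show ?thesis using e C_stable[of j "Suc j"] by (simp add: psi_def del: upt_Suc)
  next
    case False then show ?thesis using e C_stable[of "j - 1" "Suc j"]
      by (cases j) (simp_all add: psi_def del: upt_Suc)
  qed
qed

lemma psi1: "psi_inf z w (Suc 0) = (if w 0 = z then z else w 0)"
  by (simp add: psiS)

lemma psi_mono_aux: "\<forall>(x::nat \<Rightarrow> 'a::linorder) y. (\<forall>j<p. x j = y j) \<and> x p < y p \<longrightarrow>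
   (\<exists>q. (\<forall>j<q. psi_inf z x j = psi_inf z y j) \<and> psi_inf z x q < psi_inf z y q)"
proof (induction p)
  case 0
  show ?case
  proof (intro allI impI)
    fix x y :: "nat \<Rightarrow> 'a" assume h: "(\<forall>j<0. x j = y j) \<and> x 0 < y 0"
    have "(\<forall>j<Suc 0. psi_inf z x j = psi_inf z y j) \<and> psi_inf z x (Suc 0) < psi_inf z y (Suc 0)"
      using h by (auto simp: psi1)
    then show "\<exists>q. (\<forall>j<q. psi_inf z x j = psi_inf z y j) \<and> psi_inf z x q < psi_inf z y q" by blast
  qed
next
  case (Suc p)
  show ?case
  proof (intro allI impI)
    fix x y :: "nat \<Rightarrow> 'a" assume h: "(\<forall>j<Suc p. x j = y j) \<and> x (Suc p) < y (Suc p)"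
    then obtain q where q: "\<forall>j<q. psi_inf z (\<lambda>k. x (Suc k)) j = psi_inf z (\<lambda>k. y (Suc k)) j"
       "psi_inf z (\<lambda>k. x (Suc k)) q < psi_inf z (\<lambda>k. y (Suc k)) q"
      using Suc.IH[rule_format, of "\<lambda>k. x (Suc k)" "\<lambda>k. y (Suc k)"] by auto
    have x0: "x 0 = y 0" using h by auto
    show "\<exists>q. (\<forall>j<q. psi_inf z x j = psi_inf z y j) \<and> psi_inf z x q < psi_inf z y q"
    proof (cases "x 0 = z")
      case True
      have "(\<forall>j<Suc q. psi_inf z x j = psi_inf z y j) \<and> psi_inf z x (Suc q) < psi_inf z y (Suc q)"
        using q True x0 by (auto simp: psiS less_Suc_eq_0_disj)
      then show ?thesis by blast
    next
      case False
      have "(\<forall>j<Suc (Suc q). psi_inf z x j = psi_inf z y j) \<and> psi_inf z x (Suc (Suc q)) < psi_inf z y (Suc (Suc q))"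
        using q False x0 by (auto simp: psiS less_Suc_eq_0_disj)
      then show ?thesis by blast
    qed
  qed
qed

lemma psi_mono: "lex_le x y \<Longrightarrow> lex_le (psi_inf z x) (psi_inf z y)"
  unfolding lex_le_def using psi_mono_aux by blast

lemma psi_inj_aux: "\<forall>x y. (\<forall>j<p. x j = y j) \<and> x p \<noteq> y p \<longrightarrow> psi_inf z x \<noteq> psi_inf z y"
proof (induction p)
  case 0
  show ?case
  proof (intro allI impI)
    fix x y :: "nat \<Rightarrow> 'a" assume h: "(\<forall>j<0. x j = y j) \<and> x 0 \<noteq> y 0"
    then have "psi_inf z x (Suc 0) \<noteq> psi_inf z y (Suc 0)" by (auto simp: psi1)
    then show "psi_inf z x \<noteq> psi_inf z y" by (rule contrapos_nn) simp
  qed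
next
  case (Suc p)
  show ?case
  proof (intro allI impI)
    fix x y :: "nat \<Rightarrow> 'a" assume h: "(\<forall>j<Suc p. x j = y j) \<and> x (Suc p) \<noteq> y (Suc p)"
    then have "psi_inf z (\<lambda>k. x (Suc k)) \<noteq> psi_inf z (\<lambda>k. y (Suc k))"
      using Suc.IH[rule_format, of "\<lambda>k. x (Suc k)" "\<lambda>k. y (Suc k)"] by auto
    then obtain n where n: "psi_inf z (\<lambda>k. x (Suc k)) n \<noteq> psi_inf z (\<lambda>k. y (Suc k)) n" by (auto simp: fun_eq_iff)
    have x0: "x 0 = y 0" using h by auto
    show "psi_inf z x \<noteq> psi_inf z y"
    proof (cases "x 0 = z")
      case True
      then have "psi_inf z x (Suc n) \<noteq> psi_inf z y (Suc n)" using n x0 by (simp add: psiS)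
      then show ?thesis by (rule contrapos_nn) simp
    next
      case False
      then have "psi_inf z x (Suc (Suc n)) \<noteq> psi_inf z y (Suc (Suc n))" using n x0 by (simp add: psiS)
      then show ?thesis by (rule contrapos_nn) simp
    qed
  qed
qed

lemma psi_inj: assumes "psi_inf z x = psi_inf z y" shows "x = y"
proof (rule ccontr)
  assume "x \<noteq> y"
  then have "\<exists>p. x p \<noteq> y p" by (auto simp: fun_eq_iff)
  then have "\<exists>p. x p \<noteq> y p \<and> (\<forall>j<p. \<not> x j \<noteq> y j)" by (simp only: exists_least_iff[symmetric])
  then obtain p where p: "x p \<noteq> y p" "\<forall>j<p. x j = y j" by auto
  have "psi_inf z x \<noteq> psi_inf z y" using psi_inj_aux[of p z] p by auto
  then show False using assms by simp
qed

lemma psi_agree: "\<forall>x y. (\<forall>j<K. x j = y j) \<longrightarrow> (\<forall>j<K. psi_inf z x j = psi_inf z y j)"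
proof (induction K)
  case 0 then show ?case by simp
next
  case (Suc K)
  show ?case
  proof (intro allI impI)
    fix x y :: "nat \<Rightarrow> 'a" and j assume h: "\<forall>j<Suc K. x j = y j" "j < Suc K"
    have t: "\<forall>j<K. psi_inf z (\<lambda>k. x (Suc k)) j = psi_inf z (\<lambda>k. y (Suc k)) j"
      using Suc.IH h by auto
    have x0: "x 0 = y 0" using h by auto
    show "psi_inf z x j = psi_inf z y j"
    proof (cases j)
      case 0 then show ?thesis by simp
    next
      case (Suc j')
      then show ?thesis using t x0 h(2)
        by (cases j') (auto simp: psiS)
    qed
  qed
qed

lemma sh_Suc: "sh (Suc j) w = (\<lambda>n. sh j w (Suc n))" by (simp add: sh_def)
lemma sh_0[simp]: "sh 0 w = w" by (simp add: sh_def)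
lemma sh_app0[simp]: "sh i w 0 = w i" by (simp add: sh_def)
lemma sh_Suc_app: "sh (Suc j) w n = sh j w (Suc n)" by (simp add: sh_def)

lemma shifts: "\<exists>i. sh j (psi_inf z t1) = psi_inf z (sh i t1) \<or>
   (t1 i \<noteq> z \<and> sh j (psi_inf z t1) = case_nat (t1 i) (psi_inf z (sh (Suc i) t1)))"
proof (induction j)
  case 0 then show ?case by (intro exI[of _ 0]) simp
next
  case (Suc j)
  then obtain i where i: "sh j (psi_inf z t1) = psi_inf z (sh i t1) \<or>
   (t1 i \<noteq> z \<and> sh j (psi_inf z t1) = case_nat (t1 i) (psi_inf z (sh (Suc i) t1)))" by blast
  have e: "(\<lambda>k. sh i t1 (Suc k)) = sh (Suc i) t1" by (simp add: sh_def)
  show ?case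
  proof (cases "sh j (psi_inf z t1) = psi_inf z (sh i t1)")
    case True
    show ?thesis
    proof (cases "t1 i = z")
      case True2: True
      have "sh (Suc j) (psi_inf z t1) = psi_inf z (sh (Suc i) t1)"
        using True True2 by (intro ext) (simp add: sh_Suc_app psiS e)
      then show ?thesis by blast
    next
      case False
      have "sh (Suc j) (psi_inf z t1) = case_nat (t1 i) (psi_inf z (sh (Suc i) t1))"
        using True False by (intro ext) (simp add: sh_Suc_app psiS e split: nat.split)
      then show ?thesis using False by blast
    qed
  next
    case False
    with i have "sh (Suc j) (psi_inf z t1) = psi_inf z (sh (Suc i) t1)"
      by (intro ext) (simp add: sh_Suc_app)
    then show ?thesis by blast
  qed
qed

lemma shifts2: "\<exists>q. sh q (psi_inf z t1) = psi_inf z (sh i t1)"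
proof (induction i)
  case 0 then show ?case by (rule exI[of _ 0]) simp
next
  case (Suc i)
  then obtain q where q: "sh q (psi_inf z t1) = psi_inf z (sh i t1)" by blast
  have e: "(\<lambda>k. sh i t1 (Suc k)) = sh (Suc i) t1" by (simp add: sh_def)
  show ?case
  proof (cases "t1 i = z")
    case True
    have "sh (Suc q) (psi_inf z t1) = psi_inf z (sh (Suc i) t1)"
      using q True by (intro ext) (simp add: sh_Suc_app psiS e)
    then show ?thesis by blast
  next
    case False
    have "sh (Suc (Suc q)) (psi_inf z t1) = psi_inf z (sh (Suc i) t1)"
      using q False by (intro ext) (simp add: sh_Suc_app psiS e)
    then show ?thesis by blast
  qed
qed

lemma lex_le_head: "lex_le x y \<Longrightarrow> x 0 \<le> y 0"
  unfolding lex_le_def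
proof (elim disjE exE conjE)
  fix p assume "\<forall>j<p. x j = y j" "x p < y p"
  then show "x 0 \<le> y 0" by (cases p) auto
qed simp

lemma lex_le_tail: "lex_le x y \<Longrightarrow> x 0 = y 0 \<Longrightarrow> lex_le (\<lambda>n. x (Suc n)) (\<lambda>n. y (Suc n))"
  unfolding lex_le_def
proof (elim disjE exE conjE)
  fix p assume "\<forall>j<p. x j = y j" "x p < y p" "x 0 = y 0"
  then obtain p' where "p = Suc p'" by (cases p) auto
  then show "(\<lambda>n. x (Suc n)) = (\<lambda>n. y (Suc n)) \<or> (\<exists>p. (\<forall>j<p. x (Suc j) = y (Suc j)) \<and> x (Suc p) < y (Suc p))"
    using \<open>\<forall>j<p. x j = y j\<close> \<open>x p < y p\<close> by (intro disjI2 exI[of _ p']) auto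
qed auto

lemma lex_lt_head: "x 0 < y 0 \<Longrightarrow> lex_le x y"
  unfolding lex_le_def by (intro disjI2 exI[of _ 0]) auto

lemma lex_le_cons: "lex_le X Y \<Longrightarrow> lex_le (case_nat b X) (case_nat b Y)"
  unfolding lex_le_def
proof (elim disjE exE conjE)
  fix p assume h: "\<forall>j<p. X j = Y j" "X p < Y p"
  have "(\<forall>j<Suc p. case_nat b X j = case_nat b Y j) \<and> case_nat b X (Suc p) < case_nat b Y (Suc p)"
    using h by (auto simp: less_Suc_eq_0_disj)
  then show "case_nat b X = case_nat b Y \<or> (\<exists>p. (\<forall>j<p. case_nat b X j = case_nat b Y j) \<and> case_nat b X p < case_nat b Y p)"
    by blast
qed auto

lemma key:
  fixes t1 :: "nat \<Rightarrow> 'a::{finite,linorder}"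
  assumes zr: "z \<in> range t1"
  shows "min_word (psi_inf z t1) = case_nat (min_word t1 0) (psi_inf z (\<lambda>n. min_word t1 (Suc n)))"
proof -
  define m where "m = min_word t1"
  define b where "b = m 0"
  define tm where "tm = (\<lambda>n. m (Suc n))"
  define x where "x = case_nat b (psi_inf z tm)"
  define t where "t = psi_inf z t1"
  have mp: "\<forall>k. pre k m \<in> factors t1 k" and ml: "\<forall>i. lex_le m (sh i t1)"
    using min_word_props[of t1] unfolding m_def by auto
  have bz: "b \<le> z"
  proof -
    obtain i0 where "z = t1 i0" using zr by auto
    then show ?thesis using lex_le_head[OF ml[rule_format, of i0]] unfolding b_def by (simp add: sh_def)
  qed
  have xz: "b = z \<Longrightarrow> x = psi_inf z m"
    by (rule ext, case_tac xa) (auto simp: x_def psiS tm_def b_def)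
  have xnz: "b \<noteq> z \<Longrightarrow> x n = psi_inf z m (Suc n)" for n
    by (auto simp: x_def psiS tm_def b_def)
  have A: "\<forall>k. pre k x \<in> factors t k"
  proof
    fix k
    obtain i where i: "pre (Suc k) m = pre (Suc k) (sh i t1)" using mp[rule_format, of "Suc k"]
      by (auto simp: factors_pre)
    have ag: "\<forall>j<Suc k. m j = sh i t1 j"
    proof (intro allI impI)
      fix j assume "j < Suc k"
      then show "m j = sh i t1 j" using arg_cong[OF i, of "\<lambda>l. l ! j"] by simp
    qed
    have agp0: "(\<forall>j<Suc k. m j = sh i t1 j) \<longrightarrow> (\<forall>j<Suc k. psi_inf z m j = psi_inf z (sh i t1) j)"
      using psi_agree[of "Suc k" z, THEN spec[of _ m], THEN spec[of _ "sh i t1"]] .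
    have agp: "\<forall>j<Suc k. psi_inf z m j = psi_inf z (sh i t1) j" using HOL.mp[OF agp0 ag] .
    obtain q where q: "sh q t = psi_inf z (sh i t1)" using shifts2[of z t1 i] unfolding t_def by blast
    show "pre k x \<in> factors t k"
    proof (cases "b = z")
      case True
      have "pre k x = pre k (sh q t)" unfolding pre_def using agp q xz[OF True] by auto
      then show ?thesis by (auto simp: factors_pre)
    next
      case False
      have "pre k x = pre k (sh (Suc q) t)" unfolding pre_def using agp q xnz[OF False]
        by (auto simp: sh_Suc)
      then show ?thesis by (auto simp: factors_pre)
    qed
  qed
  have B: "\<forall>j. lex_le x (sh j t)"
  proof
    fix j
    obtain i where i: "sh j t = psi_inf z (sh i t1) \<or>
       (t1 i \<noteq> z \<and> sh j t = case_nat (t1 i) (psi_inf z (sh (Suc i) t1)))"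
      using shifts[of j z t1] unfolding t_def by blast
    have mi: "lex_le m (sh i t1)" using ml by blast
    show "lex_le x (sh j t)"
    proof (cases "sh j t = psi_inf z (sh i t1)")
      case True
      show ?thesis
      proof (cases "b = z")
        case True2: True
        show ?thesis using True xz[OF True2] psi_mono[OF mi] by simp
      next
        case False
        then have "x 0 < sh j t 0" using bz True by (simp add: x_def)
        then show ?thesis by (rule lex_lt_head)
      qed
    next
      case False
      with i have c: "t1 i \<noteq> z" "sh j t = case_nat (t1 i) (psi_inf z (sh (Suc i) t1))" by auto
      have "b \<le> t1 i" using lex_le_head[OF mi] by (simp add: b_def sh_def)
      then show ?thesis
      proof (cases "b < t1 i")
        case True
        then show ?thesis using c by (intro lex_lt_head) (simp add: x_def)
      next
        case False
        then have bt: "b = t1 i" using \<open>b \<le> t1 i\<close> by simp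
        have "lex_le tm (\<lambda>n. sh i t1 (Suc n))" using lex_le_tail[OF mi] bt
          unfolding tm_def b_def by (simp add: sh_def)
        moreover have "(\<lambda>n. sh i t1 (Suc n)) = sh (Suc i) t1" by (simp add: sh_def)
        ultimately have "lex_le (psi_inf z tm) (psi_inf z (sh (Suc i) t1))" using psi_mono by simp
        then show ?thesis using c bt unfolding x_def by (simp add: lex_le_cons)
      qed
    qed
  qed
  have "min_word t = x" using min_word_char[OF A B] .
  then show ?thesis unfolding t_def x_def b_def tm_def m_def .
qed

theorem mainTheorem1:
  fixes t s t1 s1 :: "nat \<Rightarrow> 'a::{finite, linorder}"
    and a z :: "'a"
  assumes "t = psi_inf z t1"
    and "s = psi_inf z s1"
    and "z \<in> range t1"
  shows "min_word t1 = case_nat a s1 \<longleftrightarrow> min_word t = case_nat a s"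
proof -
  have k: "min_word t = case_nat (min_word t1 0) (psi_inf z (\<lambda>n. min_word t1 (Suc n)))"
    using key[OF assms(3)] assms(1) by simp
  show ?thesis
  proof
    assume h: "min_word t1 = case_nat a s1"
    then have "(\<lambda>n. min_word t1 (Suc n)) = s1" by auto
    then show "min_word t = case_nat a s" using k h assms(2) by simp
  next
    assume h: "min_word t = case_nat a s"
    have a: "min_word t1 0 = a" using arg_cong[OF h, of "\<lambda>f. f 0"] k by simp
    have "psi_inf z (\<lambda>n. min_word t1 (Suc n)) = psi_inf z s1"
    proof
      fix n show "psi_inf z (\<lambda>n. min_word t1 (Suc n)) n = psi_inf z s1 n"
        using arg_cong[OF h, of "\<lambda>f. f (Suc n)"] k assms(2) by simp
    qed
    then have "(\<lambda>n. min_word t1 (Suc n)) = s1" by (rule psi_inj)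
    then show "min_word t1 = case_nat a s1"
      using a by (intro ext, case_tac x) (auto dest: fun_cong)
  qed
qed

end
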